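(* For all $N$-tuples $\mathbf{i},\mathbf{j}$ with $\mathbf{0}\leq\mathbf{i},\mathbf{j}\leq\boldsymbol{\ell}$ componentwise, $$\sum_{\mathbf{x}=\mathbf{0}}^{\boldsymbol{\ell}} T_{\mathbf{i}}(\mathbf{x})\,U_{\mathbf{j}}(\mathbf{x})=\delta_{\mathbf{i},\mathbf{j}}\,.$$
   Context: Fix an $N$-tuple $\boldsymbol{\ell}=(\ell_1,\dots,\ell_N)$ of nonnegative integers and complex parameters $\omega,\omega^\star,a_1,\dots,a_N$, with $\omega,\omega^\star\notin\{-2|\boldsymbol{\ell}|+1,\dots,-2,-1\}$ (so that all denominators below are nonzero). Notation: for an $N$-tuple $\mathbf{n}$, $|\mathbf{n}|_j^k=\sum_{p=j}^k n_p$ (equal to $0$ if $j>k$) and $|\mathbf{n}|=|\mathbf{n}|_1^N$; $(x)_k=x(x+1)\cdots(x+k-1)$ is the Pochhammer symbol with $(x)_0=1$; a sum $\sum_{\mathbf{n}=\mathbf{a}}^{\mathbf{b}}$ runs over all $\mathbf{n}$ with $a_p\leq n_p\leq b_p$ for every $p$, and $\min,\max$ of tuples are taken componentwise. Define, for $\mathbf{0}\leq\mathbf{i},\mathbf{x}\leq\boldsymbol{\ell}$, $$T_{\mathbf{i}}(\mathbf{x})=\sum_{\mathbf{n}=\mathbf{0}}^{\min(\mathbf{i},\mathbf{x})}\prod_{p=1}^{N}\frac{(-x_p)_{n_p}(-i_p)_{n_p}(-\ell_p)_{i_p}}{(1)_{n_p}(-\ell_p)_{n_p}(1)_{i_p}}\,\frac{(|\mathbf{x}|_1^{p-1}+|\mathbf{n}|_1^p+|\boldsymbol{\ell}|_p^N+a_p+\omega+1)_{x_p-n_p}}{(|\mathbf{x}|+|\mathbf{n}|+|\mathbf{x}|_1^{p-1}-|\mathbf{n}|_1^{p-1}+\omega)_{x_p-n_p}}\,\frac{(|\mathbf{i}|_1^{p-1}+|\mathbf{n}|_1^p+|\boldsymbol{\ell}|_{p+1}^N-a_p+\omega^\star)_{i_p-n_p}}{(|\mathbf{i}|+|\mathbf{n}|+|\mathbf{i}|_1^{p-1}-|\mathbf{n}|_1^{p-1}+\omega^\star)_{i_p-n_p}}$$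 and $$U_{\mathbf{i}}(\mathbf{x})=\sum_{\mathbf{n}=\max(\mathbf{x},\mathbf{i})}^{\boldsymbol{\ell}}\prod_{p=1}^{N}\frac{(-n_p)_{x_p}(-n_p)_{i_p}(-\ell_p)_{n_p}}{(1)_{x_p}(-\ell_p)_{i_p}(1)_{n_p}}\,\frac{(|\mathbf{x}|_1^p+|\mathbf{n}|_1^{p-1}+|\boldsymbol{\ell}|_p^N+a_p+\omega+1)_{n_p-x_p}}{(2|\mathbf{x}|+|\mathbf{n}|_1^{p-1}-|\mathbf{x}|_1^{p-1}+\omega+1)_{n_p-x_p}}\,\frac{(|\mathbf{i}|_1^p+|\mathbf{n}|_1^{p-1}+|\boldsymbol{\ell}|_{p+1}^N-a_p+\omega^\star)_{n_p-i_p}}{(2|\mathbf{i}|+|\mathbf{n}|_1^{p-1}-|\mathbf{i}|_1^{p-1}+\omega^\star+1)_{n_p-i_p}}\,.$$ These are the change-of-basis coefficients between the eigenbasis $V(\mathbf{x})$ of $A$ and the eigenbasis $V_{\mathbf{i}}$ of $A^\star$ for the type II tridiagonal pair $(A,A^\star)$ of the paper: $V_{\mathbf{i}}=\sum_{\mathbf{x}}T_{\mathbf{i}}(\mathbf{x})V(\mathbf{x})$ and $V(\mathbf{x})=\sum_{\mathbf{i}}U_{\mathbf{i}}(\mathbf{x})V_{\mathbf{i}}$. *)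

theory Defs
  imports "HOL-Analysis.Analysis"
begin

text \<open>N-tuples are functions nat => nat indexed by 1..N.
  psum n j k = |n|_j^k (zero if j > k).\<close>

definition psum :: "(nat \<Rightarrow> nat) \<Rightarrow> nat \<Rightarrow> nat \<Rightarrow> complex" where
  "psum n j k = of_nat (\<Sum>p\<in>{j..k}. n p)"

definition tbox :: "nat \<Rightarrow> (nat \<Rightarrow> nat) \<Rightarrow> (nat \<Rightarrow> nat) \<Rightarrow> (nat \<Rightarrow> nat) set" where
  "tbox N a b = PiE {1..N} (\<lambda>p. {a p..b p})"

definition tmin :: "(nat \<Rightarrow> nat) \<Rightarrow> (nat \<Rightarrow> nat) \<Rightarrow> nat \<Rightarrow> nat" where
  "tmin u v = (\<lambda>p. min (u p) (v p))"

definition tmax :: "(nat \<Rightarrow> nat) \<Rightarrow> (nat \<Rightarrow> nat) \<Rightarrow> nat \<Rightarrow> nat" where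
  "tmax u v = (\<lambda>p. max (u p) (v p))"

definition Tcoef :: "nat \<Rightarrow> (nat \<Rightarrow> nat) \<Rightarrow> complex \<Rightarrow> complex \<Rightarrow> (nat \<Rightarrow> complex)
    \<Rightarrow> (nat \<Rightarrow> nat) \<Rightarrow> (nat \<Rightarrow> nat) \<Rightarrow> complex" where
  "Tcoef N l \<omega> \<omega>s a i x =
    (\<Sum>n\<in>tbox N (\<lambda>_. 0) (tmin i x).
      \<Prod>p\<in>{1..N}.
        pochhammer (- of_nat (x p)) (n p) * pochhammer (- of_nat (i p)) (n p)
          * pochhammer (- of_nat (l p)) (i p)
        / (pochhammer 1 (n p) * pochhammer (- of_nat (l p)) (n p) * pochhammer 1 (i p))
        * pochhammer (psum x 1 (p - 1) + psum n 1 p + psum l p N + a p + \<omega> + 1) (x p - n p)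
        / pochhammer (psum x 1 N + psum n 1 N + psum x 1 (p - 1) - psum n 1 (p - 1) + \<omega>) (x p - n p)
        * pochhammer (psum i 1 (p - 1) + psum n 1 p + psum l (p + 1) N - a p + \<omega>s) (i p - n p)
        / pochhammer (psum i 1 N + psum n 1 N + psum i 1 (p - 1) - psum n 1 (p - 1) + \<omega>s) (i p - n p))"

definition Ucoef :: "nat \<Rightarrow> (nat \<Rightarrow> nat) \<Rightarrow> complex \<Rightarrow> complex \<Rightarrow> (nat \<Rightarrow> complex)
    \<Rightarrow> (nat \<Rightarrow> nat) \<Rightarrow> (nat \<Rightarrow> nat) \<Rightarrow> complex" where
  "Ucoef N l \<omega> \<omega>s a i x =
    (\<Sum>n\<in>tbox N (tmax x i) l.
      \<Prod>p\<in>{1..N}.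
        pochhammer (- of_nat (n p)) (x p) * pochhammer (- of_nat (n p)) (i p)
          * pochhammer (- of_nat (l p)) (n p)
        / (pochhammer 1 (x p) * pochhammer (- of_nat (l p)) (i p) * pochhammer 1 (n p))
        * pochhammer (psum x 1 p + psum n 1 (p - 1) + psum l p N + a p + \<omega> + 1) (n p - x p)
        / pochhammer (2 * psum x 1 N + psum n 1 (p - 1) - psum x 1 (p - 1) + \<omega> + 1) (n p - x p)
        * pochhammer (psum i 1 p + psum n 1 (p - 1) + psum l (p + 1) N - a p + \<omega>s) (n p - i p)
        / pochhammer (2 * psum i 1 N + psum n 1 (p - 1) - psum i 1 (p - 1) + \<omega>s + 1) (n p - i p))"

end

theory Submission
  imports Defs
begin

lemma poch_shift1:
  "pochhammer ((z::complex)+1) K = pochhammer z K + of_nat K * pochhammer (z+1) (K-1)"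
proof (cases K)
  case 0 then show ?thesis by simp
next
  case (Suc K')
  have "pochhammer (z+1) (Suc K') = (z + 1 + of_nat K') * pochhammer (z+1) K'"
    by (simp add: pochhammer_rec')
  moreover have "pochhammer z (Suc K') = z * pochhammer (z+1) K'"
    by (simp add: pochhammer_rec)
  ultimately show ?thesis using Suc by (simp add: algebra_simps)
qed

lemma aux_ring:
  fixes C K SMc Cm g1 g2 P Q0 Q1 :: complex
  assumes "C * K = SMc * Cm"
  shows "C * (g1 + g2) * P * (Q0 + K * Q1) = SMc * (Cm * (g1 + g2) * P * Q1) + C * g1 * P * Q0 + C * g2 * P * Q0"
proof -
  have "SMc * (Cm * (g1 + g2) * P * Q1) = (C * K) * ((g1 + g2) * P * Q1)" using assms by (simp add: algebra_simps)
  then show ?thesis by (simp add: algebra_simps)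
qed

definition gg :: "nat \<Rightarrow> nat \<Rightarrow> nat \<Rightarrow> complex" where
  "gg A r j = (if j \<le> r then of_nat (A choose (r - j)) else 0)"

lemma gg_pascal: "gg (Suc A) (Suc r) j = gg A (Suc r) j + gg A r j"
  unfolding gg_def
  by (cases "j \<le> r"; cases "j = Suc r") (auto simp: Suc_diff_le)

definition Gs :: "nat \<Rightarrow> nat \<Rightarrow> nat \<Rightarrow> complex \<Rightarrow> complex" where
  "Gs A M r w = (\<Sum>j\<le>M. of_nat (M choose j) * gg A r j * pochhammer (w - of_nat j) j
      * pochhammer (w + of_nat A) (M - j))"

lemma Gs_rec:
  "Gs (Suc A) (Suc M) (Suc r) w = of_nat (Suc M) * Gs (Suc A) M (Suc r) w
     + Gs A (Suc M) (Suc r) w + Gs A (Suc M) r w"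
proof -
  have exS: "Gs (Suc A) M (Suc r) w = (\<Sum>j\<le>Suc M. of_nat (M choose j) * gg (Suc A) (Suc r) j
      * pochhammer (w - of_nat j) j * pochhammer (w + of_nat (Suc A)) (M - j))"
    unfolding Gs_def by simp
  have tm: "of_nat (Suc M choose j) * gg (Suc A) (Suc r) j * pochhammer (w - of_nat j) j
      * pochhammer (w + of_nat (Suc A)) (Suc M - j)
    = of_nat (Suc M) * (of_nat (M choose j) * gg (Suc A) (Suc r) j
      * pochhammer (w - of_nat j) j * pochhammer (w + of_nat (Suc A)) (M - j))
    + of_nat (Suc M choose j) * gg A (Suc r) j * pochhammer (w - of_nat j) j
      * pochhammer (w + of_nat A) (Suc M - j)
    + of_nat (Suc M choose j) * gg A r j * pochhammer (w - of_nat j) j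
      * pochhammer (w + of_nat A) (Suc M - j)" for j
  proof -
    have q: "pochhammer (w + of_nat (Suc A)) (Suc M - j) = pochhammer (w + of_nat A) (Suc M - j)
       + of_nat (Suc M - j) * pochhammer (w + of_nat (Suc A)) (M - j)"
    proof -
      have e: "w + of_nat (Suc A) = (w + of_nat A) + 1" by simp
      have e2: "Suc M - j - 1 = M - j" by simp
      show ?thesis unfolding e using poch_shift1[of "w + of_nat A" "Suc M - j"] unfolding e2 .
    qed
    have c: "of_nat (Suc M choose j) * (of_nat (Suc M - j) :: complex) = of_nat (Suc M) * of_nat (M choose j)"
      using binomial_absorb_comp[of "Suc M" j] by (metis diff_Suc_1 mult.commute of_nat_mult)
    show ?thesis
      unfolding q gg_pascal
      by (rule aux_ring[OF c])
  qed
  have "Gs (Suc A) (Suc M) (Suc r) w = (\<Sum>j\<le>Suc M. of_nat (Suc M) * (of_nat (M choose j) * gg (Suc A) (Suc r) j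
      * pochhammer (w - of_nat j) j * pochhammer (w + of_nat (Suc A)) (M - j))
    + of_nat (Suc M choose j) * gg A (Suc r) j * pochhammer (w - of_nat j) j
      * pochhammer (w + of_nat A) (Suc M - j)
    + of_nat (Suc M choose j) * gg A r j * pochhammer (w - of_nat j) j
      * pochhammer (w + of_nat A) (Suc M - j))"
    unfolding Gs_def by (rule sum.cong[OF refl], rule tm)
  also have "\<dots> = of_nat (Suc M) * Gs (Suc A) M (Suc r) w
     + Gs A (Suc M) (Suc r) w + Gs A (Suc M) r w"
    unfolding sum.distrib exS sum_distrib_left by (simp only: Gs_def)
  finally show ?thesis .
qed

lemma Gs_M0: "Gs A 0 r w = of_nat (A choose r)"
  unfolding Gs_def gg_def by simp

lemma Gs_r0: "Gs A M 0 w = pochhammer (w + of_nat A) M"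
proof -
  have "Gs A M 0 w = (\<Sum>j\<in>{0}. of_nat (M choose j) * gg A 0 j * pochhammer (w - of_nat j) j
      * pochhammer (w + of_nat A) (M - j))"
    unfolding Gs_def by (rule sum.mono_neutral_right) (auto simp: gg_def)
  then show ?thesis by (simp add: gg_def)
qed

lemma Gs_A0: "Gs 0 M r w = of_nat (M choose r) * pochhammer (w - of_nat r) M"
proof (cases "r \<le> M")
  case True
  have "Gs 0 M r w = (\<Sum>j\<in>{r}. of_nat (M choose j) * gg 0 r j * pochhammer (w - of_nat j) j
      * pochhammer (w + of_nat 0) (M - j))"
    unfolding Gs_def using True by (intro sum.mono_neutral_right) (auto simp: gg_def)
  also have "\<dots> = of_nat (M choose r) * (pochhammer (w - of_nat r) r * pochhammer (w - of_nat r + of_nat r) (M - r))"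
    by (simp add: gg_def)
  also have "\<dots> = of_nat (M choose r) * pochhammer (w - of_nat r) M"
    using pochhammer_product[OF True, of "w - of_nat r"] by simp
  finally show ?thesis .
next
  case False
  then have "Gs 0 M r w = 0" unfolding Gs_def gg_def by (intro sum.neutral) auto
  then show ?thesis using False by simp
qed

lemma Gs_closed: "Gs A M r w = of_nat ((A + M) choose r) * pochhammer (w + of_nat A - of_nat r) M"
proof (induction M arbitrary: A r)
  case 0
  then show ?case by (simp add: Gs_M0)
next
  case (Suc M)
  note IHM = Suc.IH
  show ?case
  proof (induction A arbitrary: r)
    case 0
    then show ?case by (simp add: Gs_A0)
  next
    case (Suc A)
    show ?case
    proof (cases r)
      case 0
      then show ?thesis by (simp add: Gs_r0)
    next
      case (Suc r')
      define z where "z = w + of_nat A - of_nat r' - 1"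
      have e1: "w + of_nat (Suc A) - of_nat (Suc r') = z + 1" unfolding z_def by simp
      have e2: "w + of_nat A - of_nat (Suc r') = z" unfolding z_def by simp
      have e3: "w + of_nat A - of_nat r' = z + 1" unfolding z_def by simp
      have p: "pochhammer (z + 1) (Suc M) = pochhammer z (Suc M) + of_nat (Suc M) * pochhammer (z+1) M"
        using poch_shift1[of z "Suc M"] by simp
      have b: "((Suc A + Suc M) choose (Suc r')) = ((Suc A + M) choose (Suc r')) + ((Suc A + M) choose r')"
        by simp
      have "Gs (Suc A) (Suc M) (Suc r') w = of_nat (Suc M) * Gs (Suc A) M (Suc r') w
         + Gs A (Suc M) (Suc r') w + Gs A (Suc M) r' w" by (rule Gs_rec)
      also have "\<dots> = of_nat (Suc M) * (of_nat ((Suc A + M) choose Suc r') * pochhammer (z + 1) M)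
         + of_nat ((A + Suc M) choose Suc r') * pochhammer z (Suc M)
         + of_nat ((A + Suc M) choose r') * pochhammer (z + 1) (Suc M)"
        unfolding IHM[of "Suc A"] Suc.IH e1 e2 e3 by simp
      also have "\<dots> = of_nat ((Suc A + Suc M) choose Suc r') * pochhammer (z + 1) (Suc M)"
        unfolding b p by (simp add: algebra_simps)
      finally show ?thesis unfolding Suc e1 .
    qed
  qed
qed

lemma one_step:
  fixes c :: complex
  assumes bL: "b \<le> L" and st: "s \<le> t"
  shows "(\<Sum>y\<in>{0..L}. (if y \<le> k \<and> s \<le> k - y then of_nat ((t - s) choose (k - y - s)) else 0)
      * ((if a \<le> y then of_nat (y choose a) * pochhammer (of_nat (k - y + (s + a)) + c) (y - a) else 0)
       * (if y \<le> b then of_nat (b choose y) * pochhammer (of_nat (t + k) + c) (b - y) else 0)))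
    = (if s + a \<le> k then of_nat ((t + b - (s + a)) choose (k - (s + a))) else 0)
      * (if a \<le> b then of_nat (b choose a) * pochhammer (of_nat (t + (s + a)) + c) (b - a) else 0)"
    (is "?L = ?R")
proof (cases "a \<le> b \<and> s + a \<le> k")
  case False
  then have "?L = 0" by (intro sum.neutral) auto
  then show ?thesis using False by auto
next
  case True
  then have ab: "a \<le> b" and sak: "s + a \<le> k" by auto
  define r where "r = k - (s + a)"
  define M where "M = b - a"
  define A where "A = t - s"
  define w where "w = of_nat (r + 2 * s + a) + c"
  let ?f = "\<lambda>y. (if y \<le> k \<and> s \<le> k - y then of_nat ((t - s) choose (k - y - s)) else 0)
      * ((if a \<le> y then of_nat (y choose a) * pochhammer (of_nat (k - y + (s + a)) + c) (y - a) else 0)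
       * (if y \<le> b then of_nat (b choose y) * pochhammer (of_nat (t + k) + c) (b - y) else (0::complex)))"
  have "?L = sum ?f {a..b}"
    using bL by (intro sum.mono_neutral_right) auto
  also have "\<dots> = sum (\<lambda>j. ?f (j + a)) {0..M}"
    using sum.shift_bounds_cl_nat_ivl[of ?f 0 a M] ab unfolding M_def by simp
  also have "\<dots> = (\<Sum>j\<le>M. of_nat (b choose a) * (of_nat (M choose j) * gg A r j * pochhammer (w - of_nat j) j
      * pochhammer (w + of_nat A) (M - j)))"
    unfolding atMost_atLeast0
  proof (rule sum.cong[OF refl])
    fix j assume j: "j \<in> {0..M}"
    then have jb: "j + a \<le> b" unfolding M_def using ab by auto
    have cm: "of_nat ((j + a) choose a) * of_nat (b choose (j + a)) = (of_nat (b choose a) * of_nat (M choose j) :: complex)"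
      using choose_mult[of a "j + a" b] jb unfolding M_def by (simp add: mult.commute flip: of_nat_mult)
    have cm': "(of_nat (b choose (a + j)) * of_nat ((a + j) choose a) :: complex) = of_nat (M choose j) * of_nat (b choose a)"
      using cm by (simp add: add.commute mult.commute)
    show "?f (j + a) = of_nat (b choose a) * (of_nat (M choose j) * gg A r j * pochhammer (w - of_nat j) j
      * pochhammer (w + of_nat A) (M - j))"
    proof (cases "j \<le> r")
      case True
      have c1: "j + a \<le> k \<and> s \<le> k - (j + a)" using True sak unfolding r_def by auto
      have c2: "k - (j + a) - s = r - j" unfolding r_def by auto
      have c3: "of_nat (k - (j + a) + (s + a)) + c = w - of_nat j"
        unfolding w_def r_def using True sak r_def by (simp add: of_nat_diff)
      have c4: "of_nat (t + k) + c = w + of_nat A"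
        unfolding w_def A_def r_def using st sak by (simp add: of_nat_diff)
      have c5: "b - (j + a) = M - j" unfolding M_def by simp
      show ?thesis using c1 jb True
        unfolding c2 c3 c4 c5 gg_def A_def[symmetric]
        by (simp add: cm)
    next
      case False
      then have "\<not> (j + a \<le> k \<and> s \<le> k - (j + a))" unfolding r_def by auto
      then have z: "(if j + a \<le> k \<and> s \<le> k - (j + a) then of_nat ((t - s) choose (k - (j + a) - s)) else (0::complex)) = 0"
        by (rule if_not_P)
      show ?thesis unfolding z using False by (simp add: gg_def)
    qed
  qed
  also have "\<dots> = of_nat (b choose a) * Gs A M r w"
    unfolding Gs_def sum_distrib_left ..
  also have "\<dots> = ?R"
    unfolding Gs_closed using True st
    by (simp add: A_def M_def r_def w_def of_nat_diff algebra_simps)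
  finally show ?thesis .
qed

definition ps :: "(nat \<Rightarrow> nat) \<Rightarrow> nat \<Rightarrow> nat" where
  "ps u p = (\<Sum>q\<in>{1..p}. u q)"

definition ef :: "(nat \<Rightarrow> complex) \<Rightarrow> (nat \<Rightarrow> nat) \<Rightarrow> (nat \<Rightarrow> nat) \<Rightarrow> nat \<Rightarrow> complex" where
  "ef \<alpha> u v p = (if u p \<le> v p then of_nat (v p choose u p)
      * pochhammer (of_nat (ps v (p - 1) + ps u p) + \<alpha> p) (v p - u p) else 0)"

definition EE :: "nat \<Rightarrow> (nat \<Rightarrow> complex) \<Rightarrow> (nat \<Rightarrow> nat) \<Rightarrow> (nat \<Rightarrow> nat) \<Rightarrow> complex" where
  "EE N \<alpha> u v = (\<Prod>p\<in>{1..N}. ef \<alpha> u v p)"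

lemma ps_0[simp]: "ps u 0 = 0" unfolding ps_def by simp

lemma ps_Suc: "ps u (Suc N) = ps u N + u (Suc N)"
  unfolding ps_def by simp

lemma ps_upd: "p \<le> N \<Longrightarrow> ps (g(Suc N := y)) p = ps g p"
  unfolding ps_def by (intro sum.cong) auto

lemma ps_upd_Suc: "ps (g(Suc N := y)) (Suc N) = ps g N + y"
  unfolding ps_Suc using ps_upd[of N N g y] by simp

lemma ef_upd1: "p \<in> {1..N} \<Longrightarrow> ef \<alpha> n (g(Suc N := y)) p = ef \<alpha> n g p"
  unfolding ef_def using ps_upd[of p N g y] ps_upd[of "p - 1" N g y] by auto

lemma ef_upd2: "p \<in> {1..N} \<Longrightarrow> ef \<alpha> (g(Suc N := y)) m p = ef \<alpha> g m p"
  unfolding ef_def using ps_upd[of p N g y] ps_upd[of "p - 1" N g y] by auto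

lemma EE_Suc: "EE (Suc N) \<alpha> u v = EE N \<alpha> u v * ef \<alpha> u v (Suc N)"
  unfolding EE_def by (simp add: atLeastAtMostSuc_conv mult.commute)

lemma EE_upd1: "EE N \<alpha> n (g(Suc N := y)) = EE N \<alpha> n g"
  unfolding EE_def by (intro prod.cong) (auto simp: ef_upd1)

lemma EE_upd2: "EE N \<alpha> (g(Suc N := y)) m = EE N \<alpha> g m"
  unfolding EE_def by (intro prod.cong) (auto simp: ef_upd2)

lemma EE_zero: "\<not> (\<forall>p\<in>{1..N}. u p \<le> v p) \<Longrightarrow> EE N \<alpha> u v = 0"
  unfolding EE_def ef_def by (auto intro!: prod_zero)

lemma tbox_Suc: "tbox (Suc N) a b = (\<lambda>(y, g). g(Suc N := y)) ` ({a (Suc N)..b (Suc N)} \<times> tbox N a b)"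
proof -
  have "{1..Suc N} = insert (Suc N) {1..N}" by auto
  then show ?thesis unfolding tbox_def by (simp add: PiE_insert_eq)
qed

lemma tbox_inj: "inj_on (\<lambda>(y, g). g(Suc N := y)) ({a (Suc N)..b (Suc N)} \<times> tbox N a b)"
  unfolding tbox_def by (rule inj_combinator) auto

lemma finite_tbox[simp]: "finite (tbox N a b)"
  unfolding tbox_def by (auto intro: finite_PiE)

lemma sum_tbox_Suc:
  "(\<Sum>x\<in>tbox (Suc N) a b. f x) = (\<Sum>y\<in>{a (Suc N)..b (Suc N)}. \<Sum>g\<in>tbox N a b. f (g(Suc N := y)))"
  unfolding tbox_Suc sum.reindex[OF tbox_inj] sum.cartesian_product by (simp add: case_prod_beta)

lemma ps_mono: "\<forall>p\<in>{1..N}. u p \<le> v p \<Longrightarrow> ps u N \<le> ps v N"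
  unfolding ps_def by (rule sum_mono) auto

lemma star:
  assumes "\<forall>p\<in>{1..N}. m p \<le> l p"
  shows "(\<Sum>x\<in>{x\<in>tbox N (\<lambda>_. 0) l. ps x N = k}. EE N \<alpha> n x * EE N \<alpha> x m)
    = (if ps n N \<le> k then of_nat ((ps m N - ps n N) choose (k - ps n N)) else 0) * EE N \<alpha> n m"
  using assms
proof (induction N arbitrary: k)
  case 0
  have "tbox 0 (\<lambda>_. 0) l = {\<lambda>_. undefined}" unfolding tbox_def by simp
  then show ?case by (cases k) (simp_all add: EE_def)
next
  case (Suc N)
  let ?X = "tbox N (\<lambda>_. 0) l"
  define s where "s = ps n N"
  define t where "t = ps m N"
  define a where "a = n (Suc N)"
  define b where "b = m (Suc N)"
  define c where "c = \<alpha> (Suc N)"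
  have bL: "b \<le> l (Suc N)" using Suc.prems unfolding b_def by auto
  have IH: "(\<Sum>x\<in>{x\<in>?X. ps x N = k'}. EE N \<alpha> n x * EE N \<alpha> x m)
    = (if s \<le> k' then of_nat ((t - s) choose (k' - s)) else 0) * EE N \<alpha> n m" for k'
    using Suc.IH[of k'] Suc.prems unfolding s_def t_def by auto
  let ?Fn = "\<lambda>y. (if a \<le> y then of_nat (y choose a) * pochhammer (of_nat (k - y + (s + a)) + c) (y - a) else 0)"
  let ?Fm = "\<lambda>y. (if y \<le> b then of_nat (b choose y) * pochhammer (of_nat (t + k) + c) (b - y) else (0::complex))"
  have inner: "(\<Sum>g\<in>?X. if ps (g(Suc N := y)) (Suc N) = k then EE (Suc N) \<alpha> n (g(Suc N := y)) * EE (Suc N) \<alpha> (g(Suc N := y)) m else 0)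
     = (if y \<le> k \<and> s \<le> k - y then of_nat ((t - s) choose (k - y - s)) else 0) * (?Fn y * ?Fm y) * EE N \<alpha> n m" for y
  proof (cases "y \<le> k")
    case True
    have "(\<Sum>g\<in>?X. if ps (g(Suc N := y)) (Suc N) = k then EE (Suc N) \<alpha> n (g(Suc N := y)) * EE (Suc N) \<alpha> (g(Suc N := y)) m else 0)
      = (\<Sum>g\<in>?X. if ps g N = k - y then (?Fn y * ?Fm y) * (EE N \<alpha> n g * EE N \<alpha> g m) else 0)"
    proof (rule sum.cong[OF refl])
      fix g assume "g \<in> ?X"
      show "(if ps (g(Suc N := y)) (Suc N) = k then EE (Suc N) \<alpha> n (g(Suc N := y)) * EE (Suc N) \<alpha> (g(Suc N := y)) m else 0)
        = (if ps g N = k - y then (?Fn y * ?Fm y) * (EE N \<alpha> n g * EE N \<alpha> g m) else 0)"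
      proof (cases "ps g N = k - y")
        case True2: True
        have e1: "ef \<alpha> n (g(Suc N := y)) (Suc N) = ?Fn y"
          unfolding ef_def using True2 True by (simp add: ps_upd ps_Suc a_def s_def c_def add.commute)
        have e2: "ef \<alpha> (g(Suc N := y)) m (Suc N) = ?Fm y"
          unfolding ef_def using True2 True by (simp add: ps_upd ps_upd_Suc b_def t_def c_def)
        show ?thesis using True2 True unfolding EE_Suc EE_upd1 EE_upd2 e1 e2 ps_upd_Suc
          by (simp add: algebra_simps)
      next
        case False
        then show ?thesis using True unfolding ps_upd_Suc by auto
      qed
    qed
    also have "\<dots> = (?Fn y * ?Fm y) * (\<Sum>g\<in>{g\<in>?X. ps g N = k - y}. EE N \<alpha> n g * EE N \<alpha> g m)"
      by (simp add: sum.inter_filter sum_distrib_left if_distrib cong: if_cong)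
    also have "\<dots> = (if y \<le> k \<and> s \<le> k - y then of_nat ((t - s) choose (k - y - s)) else 0) * (?Fn y * ?Fm y) * EE N \<alpha> n m"
      unfolding IH using True by (simp add: algebra_simps)
    finally show ?thesis .
  next
    case False
    have "(\<Sum>g\<in>?X. if ps (g(Suc N := y)) (Suc N) = k then EE (Suc N) \<alpha> n (g(Suc N := y)) * EE (Suc N) \<alpha> (g(Suc N := y)) m else 0) = 0"
      using False unfolding ps_upd_Suc by (intro sum.neutral) auto
    then show ?thesis using False by simp
  qed
  have "(\<Sum>x\<in>{x\<in>tbox (Suc N) (\<lambda>_. 0) l. ps x (Suc N) = k}. EE (Suc N) \<alpha> n x * EE (Suc N) \<alpha> x m)
     = (\<Sum>x\<in>tbox (Suc N) (\<lambda>_. 0) l. if ps x (Suc N) = k then EE (Suc N) \<alpha> n x * EE (Suc N) \<alpha> x m else 0)"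
    by (simp add: sum.inter_filter)
  also have "\<dots> = (\<Sum>y\<in>{0..l (Suc N)}. (if y \<le> k \<and> s \<le> k - y then of_nat ((t - s) choose (k - y - s)) else 0) * (?Fn y * ?Fm y) * EE N \<alpha> n m)"
    unfolding sum_tbox_Suc inner by simp
  also have "\<dots> = (\<Sum>y\<in>{0..l (Suc N)}. (if y \<le> k \<and> s \<le> k - y then of_nat ((t - s) choose (k - y - s)) else 0) * (?Fn y * ?Fm y)) * EE N \<alpha> n m"
    by (simp add: sum_distrib_right)
  also have "\<dots> = (if ps n (Suc N) \<le> k then of_nat ((ps m (Suc N) - ps n (Suc N)) choose (k - ps n (Suc N))) else 0) * EE (Suc N) \<alpha> n m"
  proof (cases "\<forall>p\<in>{1..N}. n p \<le> m p")
    case True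
    then have st: "s \<le> t" unfolding s_def t_def by (rule ps_mono)
    have ef: "ef \<alpha> n m (Suc N) = (if a \<le> b then of_nat (b choose a) * pochhammer (of_nat (t + (s + a)) + c) (b - a) else 0)"
      unfolding ef_def a_def b_def s_def t_def c_def by (simp add: ps_Suc)
    show ?thesis unfolding one_step[OF bL st] EE_Suc ef
      by (simp add: ps_Suc s_def[symmetric] t_def[symmetric] a_def[symmetric] b_def[symmetric] algebra_simps)
  next
    case False
    then show ?thesis by (simp add: EE_zero EE_Suc)
  qed
  finally show ?case .
qed

lemma alt_pascal:
  fixes f :: "nat \<Rightarrow> complex"
  shows "(\<Sum>j\<le>Suc M. (-1)^j * of_nat (Suc M choose j) * f j)
    = (\<Sum>j\<le>M. (-1)^j * of_nat (M choose j) * (f j - f (Suc j)))"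
proof -
  have A: "(\<Sum>j\<le>Suc M. (-1)^j * of_nat (Suc M choose j) * f j)
     = f 0 + (\<Sum>i\<le>M. (-1)^(Suc i) * of_nat (M choose i) * f (Suc i))
           + (\<Sum>i\<le>M. (-1)^(Suc i) * of_nat (M choose Suc i) * f (Suc i))"
    unfolding sum.atMost_Suc_shift by (simp add: ring_distribs sum.distrib sum_negf sum_subtractf)
  have B: "(\<Sum>i\<le>M. (-1)^(Suc i) * of_nat (M choose Suc i) * f (Suc i))
      = (\<Sum>j\<le>Suc M. (-1)^j * of_nat (M choose j) * f j) - f 0"
    unfolding sum.atMost_Suc_shift by simp
  have C: "(\<Sum>j\<le>Suc M. (-1)^j * of_nat (M choose j) * f j) = (\<Sum>j\<le>M. (-1)^j * of_nat (M choose j) * f j)"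
    by simp
  show ?thesis unfolding A B C by (simp add: algebra_simps sum.distrib sum_subtractf sum_negf)
qed

lemma fd_poch:
  "d < M \<Longrightarrow> (\<Sum>j\<le>M. (-1)^j * of_nat (M choose j) * pochhammer (y + of_nat j) d) = (0::complex)"
proof (induction M arbitrary: y d)
  case 0
  then show ?case by simp
next
  case (Suc M)
  have step: "pochhammer (y + of_nat j) d - pochhammer (y + of_nat (Suc j)) d
     = - (of_nat d * pochhammer ((y + 1) + of_nat j) (d - 1))" for j
    using poch_shift1[of "y + of_nat j" d] by (simp add: algebra_simps)
  have "(\<Sum>j\<le>Suc M. (-1)^j * of_nat (Suc M choose j) * pochhammer (y + of_nat j) d)
     = (\<Sum>j\<le>M. (-1)^j * of_nat (M choose j) * (- (of_nat d * pochhammer ((y + 1) + of_nat j) (d - 1))))"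
    unfolding alt_pascal step ..
  also have "\<dots> = - of_nat d * (\<Sum>j\<le>M. (-1)^j * of_nat (M choose j) * pochhammer ((y + 1) + of_nat j) (d - 1))"
    by (simp add: sum_distrib_left algebra_simps)
  also have "\<dots> = 0"
  proof (cases d)
    case 0 then show ?thesis by simp
  next
    case (Suc d') then show ?thesis using Suc.IH[of "d - 1" "y + 1"] Suc.prems by simp
  qed
  finally show ?case .
qed

lemma poch_nz:
  assumes "\<forall>t. 1 \<le> t \<and> t \<le> B \<longrightarrow> (c::complex) + of_nat t \<noteq> 0" and "1 \<le> a" and "a + len \<le> Suc B"
  shows "pochhammer (c + of_nat a) len \<noteq> 0"
proof
  assume "pochhammer (c + of_nat a) len = 0"
  then obtain k where k: "k < len" "c + of_nat a = - of_nat k" unfolding pochhammer_eq_0_iff by auto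
  then have "c + of_nat (a + k) = 0" by (simp add: add.assoc[symmetric])
  moreover have "1 \<le> a + k \<and> a + k \<le> B" using k assms by auto
  ultimately show False using assms(1) by blast
qed

lemma G2core:
  assumes nz: "\<forall>t. 1 \<le> t \<and> t \<le> 2 * M - 1 \<longrightarrow> (c::complex) + of_nat t \<noteq> 0"
  shows "(\<Sum>j\<le>M. (-1)^j * of_nat (M choose j) / (pochhammer (c + 1) j * pochhammer (c + of_nat M + of_nat j) (M - j)))
     = (if M = 0 then 1 else 0)"
proof (cases M)
  case 0 then show ?thesis by simp
next
  case (Suc M')
  define Z where "Z = pochhammer (c + 1) (2 * M - 1)"
  have Znz: "Z \<noteq> 0" unfolding Z_def using poch_nz[OF nz, of 1 "2 * M - 1"] Suc by simp
  have fac: "Z = pochhammer (c + 1) j * pochhammer (c + 1 + of_nat j) (M - 1) * pochhammer (c + of_nat M + of_nat j) (M - j)"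
    if "j \<le> M" for j
  proof -
    have "2 * M - 1 = j + ((M - 1) + (M - j))" using that Suc by auto
    then have "Z = pochhammer (c + 1) (j + ((M - 1) + (M - j)))" unfolding Z_def by simp
    also have "\<dots> = pochhammer (c + 1) j * (pochhammer (c + 1 + of_nat j) (M - 1) * pochhammer (c + 1 + of_nat j + of_nat (M - 1)) (M - j))"
      unfolding pochhammer_product' ..
    also have "c + 1 + of_nat j + of_nat (M - 1) = c + of_nat M + of_nat j" using Suc by (simp add: algebra_simps)
    finally show ?thesis by (simp add: mult.assoc)
  qed
  have "(\<Sum>j\<le>M. (-1)^j * of_nat (M choose j) / (pochhammer (c + 1) j * pochhammer (c + of_nat M + of_nat j) (M - j)))
     = (\<Sum>j\<le>M. (-1)^j * of_nat (M choose j) * pochhammer ((c + 1) + of_nat j) (M - 1)) / Z"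
    unfolding sum_divide_distrib
  proof (rule sum.cong[OF refl])
    fix j assume "j \<in> {..M}"
    then have j: "j \<le> M" by simp
    have nz1: "pochhammer (c + 1) j * pochhammer (c + of_nat M + of_nat j) (M - j) \<noteq> 0"
      using Znz fac[OF j] by auto
    show "(-1)^j * of_nat (M choose j) / (pochhammer (c + 1) j * pochhammer (c + of_nat M + of_nat j) (M - j))
       = (-1)^j * of_nat (M choose j) * pochhammer ((c + 1) + of_nat j) (M - 1) / Z"
      using nz1 Znz unfolding fac[OF j] by (simp add: field_simps)
  qed
  also have "\<dots> = 0" using fd_poch[of "M - 1" M "c + 1"] Suc by simp
  finally show ?thesis using Suc by simp
qed

lemma cancel_aux:
  fixes s a k X Y :: complex
  assumes "X \<noteq> 0" "Y \<noteq> 0" "k \<noteq> 0"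
  shows "s * (a * k) / (X * k * Y) = s * a / (X * Y)"
  using assms by (simp add: field_simps)

lemma G1core:
  assumes nz: "\<forall>t. 1 \<le> t \<and> t \<le> 2 * M - 1 \<longrightarrow> (c::complex) + of_nat t \<noteq> 0"
  shows "(\<Sum>j\<le>M. (-1)^j * of_nat (M choose j) / (pochhammer (c + of_nat j) j * pochhammer (c + of_nat (2 * j) + 1) (M - j)))
     = (if M = 0 then 1 else 0)"
proof (cases M)
  case 0 then show ?thesis by simp
next
  case (Suc M')
  define g where "g j = (if j = 0 then 0 else (-1)^(Suc j) * of_nat ((M - 1) choose (j - 1)) / pochhammer (c + of_nat j) M)" for j
  have tel: "(-1)^j * of_nat (M choose j) / (pochhammer (c + of_nat j) j * pochhammer (c + of_nat (2 * j) + 1) (M - j))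
      = g (Suc j) - g j" if j: "j \<le> M" for j
  proof -
    consider "j = 0" | "j = M" | "1 \<le> j \<and> j < M" using j by linarith
    then show ?thesis
    proof cases
      case 1 then show ?thesis unfolding g_def by (simp add: add.commute)
    next
      case 2
      have "M \<noteq> 0" using Suc by simp
      then show ?thesis using 2 unfolding g_def by (simp add: Suc)
    next
      case 3
      define P where "P = pochhammer (c + of_nat j) (Suc M)"
      have Pnz: "P \<noteq> 0" unfolding P_def using poch_nz[OF nz, of j "Suc M"] 3 by simp
      define X where "X = pochhammer (c + of_nat j) j"
      define Y where "Y = pochhammer (c + of_nat (2 * j) + 1) (M - j)"
      define Z0 where "Z0 = pochhammer (c + of_nat j) M"
      define Z1 where "Z1 = pochhammer (c + of_nat (Suc j)) M"
      have f1: "P = X * (c + of_nat (2 * j)) * Y"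
      proof -
        have "Suc M = j + Suc (M - j)" using 3 by simp
        then have "P = X * pochhammer (c + of_nat j + of_nat j) (Suc (M - j))"
          unfolding P_def X_def by (simp only: pochhammer_product')
        also have "\<dots> = X * ((c + of_nat (2 * j)) * Y)"
          unfolding Y_def pochhammer_rec by (simp add: algebra_simps)
        finally show ?thesis by (simp add: mult.assoc)
      qed
      have f2: "P = Z0 * (c + of_nat j + of_nat M)"
        unfolding P_def Z0_def pochhammer_Suc ..
      have f3: "P = (c + of_nat j) * Z1"
        unfolding P_def Z1_def pochhammer_rec by (simp add: add_ac)
      have nzs: "X \<noteq> 0" "Y \<noteq> 0" "Z0 \<noteq> 0" "Z1 \<noteq> 0" "c + of_nat j \<noteq> 0" "c + of_nat j + of_nat M \<noteq> 0"
        "c + of_nat (2 * j) \<noteq> 0"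
        using Pnz f1 f2 f3 by auto
      have b1: "of_nat M * of_nat ((M - 1) choose j) = (of_nat (M - j) * of_nat (M choose j) :: complex)"
        using binomial_absorb_comp[of M j] by (metis of_nat_mult)
      have b2: "of_nat M * of_nat ((M - 1) choose (j - 1)) = (of_nat j * of_nat (M choose j) :: complex)"
        using binomial_absorption[of "j - 1" M] 3 by (metis Suc_pred' less_le_trans of_nat_mult zero_less_one)
      have key: "of_nat ((M - 1) choose j) * (c + of_nat j) + of_nat ((M - 1) choose (j - 1)) * (c + of_nat j + of_nat M)
          = of_nat (M choose j) * (c + of_nat (2 * j))"
      proof -
        have "of_nat M * (of_nat ((M - 1) choose j) * (c + of_nat j) + of_nat ((M - 1) choose (j - 1)) * (c + of_nat j + of_nat M))
            = (of_nat M * of_nat ((M - 1) choose j)) * (c + of_nat j) + (of_nat M * of_nat ((M - 1) choose (j - 1))) * (c + of_nat j + of_nat M)"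
          by (simp add: algebra_simps)
        also have "\<dots> = of_nat (M - j) * of_nat (M choose j) * (c + of_nat j) + of_nat j * of_nat (M choose j) * (c + of_nat j + of_nat M)"
          unfolding b1 b2 ..
        also have "\<dots> = of_nat M * (of_nat (M choose j) * (c + of_nat (2 * j)))"
          using 3 by (simp add: of_nat_diff algebra_simps)
        finally have fin: "of_nat M * (of_nat ((M - 1) choose j) * (c + of_nat j) + of_nat ((M - 1) choose (j - 1)) * (c + of_nat j + of_nat M))
           = of_nat M * (of_nat (M choose j) * (c + of_nat (2 * j)))" .
        have "M \<noteq> 0" using Suc by simp
        then have "(of_nat M :: complex) \<noteq> 0" by (metis of_nat_eq_0_iff)
        with fin show ?thesis by (rule mult_left_cancel[THEN iffD1, rotated])
      qed
      have gS: "g (Suc j) = (-1)^j * of_nat ((M - 1) choose j) / Z1" unfolding g_def Z1_def by simp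
      have g0: "g j = - ((-1)^j * of_nat ((M - 1) choose (j - 1)) / Z0)" unfolding g_def Z0_def using 3 by simp
      have "g (Suc j) - g j = (-1)^j * (of_nat ((M - 1) choose j) * (c + of_nat j) + of_nat ((M - 1) choose (j - 1)) * (c + of_nat j + of_nat M)) / P"
      proof -
        have z1: "Z1 = P / (c + of_nat j)" using f3 nzs by (simp add: field_simps)
        have z0: "Z0 = P / (c + of_nat j + of_nat M)" using f2 nzs by (simp add: field_simps)
        show ?thesis unfolding gS g0 z1 z0 using nzs Pnz by (simp add: field_simps)
      qed
      also have "\<dots> = (-1)^j * of_nat (M choose j) / (X * Y)"
        unfolding key f1 using nzs(1,2,7) by (rule cancel_aux)
      finally show ?thesis unfolding X_def Y_def by simp
    qed
  qed
  have "(\<Sum>j\<le>M. (-1)^j * of_nat (M choose j) / (pochhammer (c + of_nat j) j * pochhammer (c + of_nat (2 * j) + 1) (M - j)))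
     = (\<Sum>j\<le>M. g (Suc j) - g j)" by (rule sum.cong[OF refl]) (rule tel, simp)
  also have "\<dots> = g (Suc M) - g 0" by (simp add: sum_Suc_diff atMost_atLeast0)
  also have "\<dots> = 0" unfolding g_def using Suc by simp
  finally show ?thesis using Suc by simp
qed

definition Bm :: "nat \<Rightarrow> (nat \<Rightarrow> complex) \<Rightarrow> complex \<Rightarrow> (nat \<Rightarrow> nat) \<Rightarrow> (nat \<Rightarrow> nat) \<Rightarrow> complex" where
  "Bm N \<alpha> \<omega> n x = (-1)^(ps n N) * EE N \<alpha> n x / pochhammer (of_nat (ps x N + ps n N) + \<omega>) (ps x N - ps n N)"

definition Cm :: "nat \<Rightarrow> (nat \<Rightarrow> complex) \<Rightarrow> complex \<Rightarrow> (nat \<Rightarrow> nat) \<Rightarrow> (nat \<Rightarrow> nat) \<Rightarrow> complex" where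
  "Cm N \<alpha> \<omega> x m = (-1)^(ps x N) * EE N \<alpha> x m / pochhammer (of_nat (2 * ps x N) + \<omega> + 1) (ps m N - ps x N)"

lemma sum_window:
  fixes F :: "nat \<Rightarrow> complex"
  assumes "s \<le> u" "u \<le> L" "\<forall>k. u < k \<longrightarrow> F k = 0"
  shows "(\<Sum>k\<in>{0..L}. if s \<le> k then F k else 0) = (\<Sum>j\<le>u - s. F (s + j))"
proof -
  have "(\<Sum>k\<in>{0..L}. if s \<le> k then F k else 0) = (\<Sum>k\<in>{s..u}. if s \<le> k then F k else 0)"
    using assms by (intro sum.mono_neutral_right) auto
  also have "\<dots> = (\<Sum>k\<in>{s..u}. F k)" by (rule sum.cong) auto
  also have "\<dots> = (\<Sum>j\<in>{0..u - s}. F (j + s))"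
    using sum.shift_bounds_cl_nat_ivl[of F 0 s "u - s"] assms by simp
  finally show ?thesis by (simp add: atMost_atLeast0 add.commute)
qed

lemma EE_refl: "EE N \<alpha> n n = 1"
  unfolding EE_def ef_def by simp

lemma tbox_le: "x \<in> tbox N a b \<Longrightarrow> p \<in> {1..N} \<Longrightarrow> a p \<le> x p \<and> x p \<le> b p"
  unfolding tbox_def by auto

lemma eq_of_le_ps:
  assumes "n \<in> tbox N a b" "m \<in> tbox N a b" "\<forall>p\<in>{1..N}. n p \<le> m p" "ps n N = ps m N"
  shows "n = m"
proof -
  have "\<forall>p\<in>{1..N}. n p = m p"
  proof (rule ccontr)
    assume "\<not> (\<forall>p\<in>{1..N}. n p = m p)"
    then obtain p where p: "p \<in> {1..N}" "n p < m p" using assms(3) by force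
    have "ps n N < ps m N" unfolding ps_def
      by (rule sum_strict_mono_ex1) (use assms(3) p in auto)
    then show False using assms(4) by simp
  qed
  then show ?thesis using assms(1,2) unfolding tbox_def by (intro PiE_ext) auto
qed

lemma group_ps:
  fixes h :: "(nat \<Rightarrow> nat) \<Rightarrow> complex"
  shows "(\<Sum>x\<in>tbox N (\<lambda>_. 0) l. h x) = (\<Sum>k\<in>{0..ps l N}. \<Sum>x\<in>{x\<in>tbox N (\<lambda>_. 0) l. ps x N = k}. h x)"
proof -
  have "(\<lambda>x. ps x N) ` tbox N (\<lambda>_. 0) l \<subseteq> {0..ps l N}"
    using ps_mono tbox_le by fastforce
  then show ?thesis by (intro sum.group[symmetric]) auto
qed

lemma BC:
  assumes nz: "\<forall>t. 1 \<le> t \<and> t \<le> 2 * ps l N - 1 \<longrightarrow> \<omega> + of_nat t \<noteq> 0"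
    and n: "n \<in> tbox N (\<lambda>_. 0) l" and m: "m \<in> tbox N (\<lambda>_. 0) l"
  shows "(\<Sum>x\<in>tbox N (\<lambda>_. 0) l. Bm N \<alpha> \<omega> n x * Cm N \<alpha> \<omega> x m) = (if n = m then 1 else 0)"
proof -
  define s where "s = ps n N"
  define u where "u = ps m N"
  define coef where "coef k = (-1)^s * (-1)^k / (pochhammer (of_nat (k + s) + \<omega>) (k - s)
       * pochhammer (of_nat (2 * k) + \<omega> + 1) (u - k))" for k
  have mle: "\<forall>p\<in>{1..N}. m p \<le> l p" using m tbox_le by blast
  have "(\<Sum>x\<in>tbox N (\<lambda>_. 0) l. Bm N \<alpha> \<omega> n x * Cm N \<alpha> \<omega> x m)
     = (\<Sum>k\<in>{0..ps l N}. \<Sum>x\<in>{x\<in>tbox N (\<lambda>_. 0) l. ps x N = k}. Bm N \<alpha> \<omega> n x * Cm N \<alpha> \<omega> x m)"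
    by (rule group_ps)
  also have "\<dots> = (\<Sum>k\<in>{0..ps l N}. coef k * (\<Sum>x\<in>{x\<in>tbox N (\<lambda>_. 0) l. ps x N = k}. EE N \<alpha> n x * EE N \<alpha> x m))"
    unfolding sum_distrib_left
    by (intro sum.cong refl) (auto simp: Bm_def Cm_def coef_def s_def u_def power_add)
  also have "\<dots> = (\<Sum>k\<in>{0..ps l N}. coef k * ((if s \<le> k then of_nat ((u - s) choose (k - s)) else 0) * EE N \<alpha> n m))"
    unfolding star[OF mle] s_def u_def ..
  also have "\<dots> = (\<Sum>k\<in>{0..ps l N}. if s \<le> k then coef k * of_nat ((u - s) choose (k - s)) else 0) * EE N \<alpha> n m"
    unfolding sum_distrib_right by (intro sum.cong refl) auto
  also have "\<dots> = (if n = m then 1 else 0)"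
  proof (cases "\<forall>p\<in>{1..N}. n p \<le> m p")
    case False
    then have "n \<noteq> m" by auto
    then show ?thesis using False by (simp add: EE_zero)
  next
    case True
    have su: "s \<le> u" unfolding s_def u_def using True by (rule ps_mono)
    have uL: "u \<le> ps l N" unfolding u_def using mle by (rule ps_mono)
    define c where "c = of_nat (2 * s) + \<omega>"
    have "(\<Sum>k\<in>{0..ps l N}. if s \<le> k then coef k * of_nat ((u - s) choose (k - s)) else 0)
       = (\<Sum>j\<le>u - s. coef (s + j) * of_nat ((u - s) choose (s + j - s)))"
      using su uL by (intro sum_window) auto
    also have "\<dots> = (\<Sum>j\<le>u - s. (-1)^j * of_nat ((u - s) choose j) / (pochhammer (c + of_nat j) j * pochhammer (c + of_nat (2 * j) + 1) (u - s - j)))"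
    proof (rule sum.cong[OF refl])
      fix j assume "j \<in> {..u - s}"
      have e1: "(-1::complex)^s * (-1)^(s + j) = (-1)^j"
        by (simp add: power_add flip: mult.assoc power2_eq_square[symmetric] power_mult[symmetric])
      show "coef (s + j) * of_nat ((u - s) choose (s + j - s)) = (-1)^j * of_nat ((u - s) choose j) / (pochhammer (c + of_nat j) j * pochhammer (c + of_nat (2 * j) + 1) (u - s - j))"
      proof -
        have a1: "of_nat (s + j + s) + \<omega> = c + of_nat j" unfolding c_def by simp
        have a2: "of_nat (2 * (s + j)) + \<omega> + 1 = c + of_nat (2 * j) + 1" unfolding c_def by simp
        have a3: "s + j - s = j" "u - (s + j) = u - s - j" by auto
        show ?thesis unfolding coef_def a1 a2 a3 e1 by (rule times_divide_eq_left)
      qed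
    qed
    also have "\<dots> = (if u - s = 0 then 1 else 0)"
    proof (rule G1core, intro allI impI)
      fix t assume t: "1 \<le> t \<and> t \<le> 2 * (u - s) - 1"
      have t1: "1 \<le> t" and t2: "t \<le> 2 * (u - s) - 1" using t by auto
      have t3: "t < 2 * (u - s)" using t1 t2 by simp
      have t4: "2 * s + t < 2 * u" using t3 su by simp
      have t5: "2 * s + t < 2 * ps l N" using t4 uL by simp
      have "1 \<le> 2 * s + t \<and> 2 * s + t \<le> 2 * ps l N - 1" using t1 t5 by simp
      then have "\<omega> + of_nat (2 * s + t) \<noteq> 0" using nz by blast
      then show "c + of_nat t \<noteq> 0" unfolding c_def by (simp add: algebra_simps)
    qed
    finally have S: "(\<Sum>k\<in>{0..ps l N}. if s \<le> k then coef k * of_nat ((u - s) choose (k - s)) else 0)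
        = (if u - s = 0 then 1 else 0)" .
    show ?thesis
    proof (cases "u - s = 0")
      case True2: True
      have "ps n N = ps m N" using True2 su unfolding s_def u_def by linarith
      then have nm: "n = m" by (rule eq_of_le_ps[OF n m True])
      have "(if u - s = 0 then 1 else (0::complex)) = 1" using True2 by simp
      then show ?thesis unfolding S nm by (simp add: EE_refl)
    next
      case False
      then have nm: "n \<noteq> m" unfolding s_def u_def by auto
      have "(if u - s = 0 then 1 else (0::complex)) = 0" using False by simp
      then show ?thesis unfolding S using nm by simp
    qed
  qed
  finally show ?thesis .
qed

lemma CB:
  assumes nz: "\<forall>t. 1 \<le> t \<and> t \<le> 2 * ps l N - 1 \<longrightarrow> \<omega> + of_nat t \<noteq> 0"
    and n: "n \<in> tbox N (\<lambda>_. 0) l" and m: "m \<in> tbox N (\<lambda>_. 0) l"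
  shows "(\<Sum>x\<in>tbox N (\<lambda>_. 0) l. Cm N \<alpha> \<omega> n x * Bm N \<alpha> \<omega> x m) = (if n = m then 1 else 0)"
proof -
  define s where "s = ps n N"
  define u where "u = ps m N"
  define coef where "coef k = (-1)^s * (-1)^k / (pochhammer (of_nat (2 * s) + \<omega> + 1) (k - s)
       * pochhammer (of_nat (u + k) + \<omega>) (u - k))" for k
  have mle: "\<forall>p\<in>{1..N}. m p \<le> l p" using m tbox_le by blast
  have "(\<Sum>x\<in>tbox N (\<lambda>_. 0) l. Cm N \<alpha> \<omega> n x * Bm N \<alpha> \<omega> x m)
     = (\<Sum>k\<in>{0..ps l N}. \<Sum>x\<in>{x\<in>tbox N (\<lambda>_. 0) l. ps x N = k}. Cm N \<alpha> \<omega> n x * Bm N \<alpha> \<omega> x m)"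
    by (rule group_ps)
  also have "\<dots> = (\<Sum>k\<in>{0..ps l N}. coef k * (\<Sum>x\<in>{x\<in>tbox N (\<lambda>_. 0) l. ps x N = k}. EE N \<alpha> n x * EE N \<alpha> x m))"
    unfolding sum_distrib_left
    by (intro sum.cong refl) (auto simp: Bm_def Cm_def coef_def s_def u_def power_add add.commute)
  also have "\<dots> = (\<Sum>k\<in>{0..ps l N}. coef k * ((if s \<le> k then of_nat ((u - s) choose (k - s)) else 0) * EE N \<alpha> n m))"
    unfolding star[OF mle] s_def u_def ..
  also have "\<dots> = (\<Sum>k\<in>{0..ps l N}. if s \<le> k then coef k * of_nat ((u - s) choose (k - s)) else 0) * EE N \<alpha> n m"
    unfolding sum_distrib_right by (intro sum.cong refl) auto
  also have "\<dots> = (if n = m then 1 else 0)"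
  proof (cases "\<forall>p\<in>{1..N}. n p \<le> m p")
    case False
    then have "n \<noteq> m" by auto
    then show ?thesis using False by (simp add: EE_zero)
  next
    case True
    have su: "s \<le> u" unfolding s_def u_def using True by (rule ps_mono)
    have uL: "u \<le> ps l N" unfolding u_def using mle by (rule ps_mono)
    define c where "c = of_nat (2 * s) + \<omega>"
    have "(\<Sum>k\<in>{0..ps l N}. if s \<le> k then coef k * of_nat ((u - s) choose (k - s)) else 0)
       = (\<Sum>j\<le>u - s. coef (s + j) * of_nat ((u - s) choose (s + j - s)))"
      using su uL by (intro sum_window) auto
    also have "\<dots> = (\<Sum>j\<le>u - s. (-1)^j * of_nat ((u - s) choose j) / (pochhammer (c + 1) j * pochhammer (c + of_nat (u - s) + of_nat j) (u - s - j)))"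
    proof (rule sum.cong[OF refl])
      fix j assume "j \<in> {..u - s}"
      have e1: "(-1::complex)^s * (-1)^(s + j) = (-1)^j"
        by (simp add: power_add flip: mult.assoc power2_eq_square[symmetric] power_mult[symmetric])
      show "coef (s + j) * of_nat ((u - s) choose (s + j - s)) = (-1)^j * of_nat ((u - s) choose j) / (pochhammer (c + 1) j * pochhammer (c + of_nat (u - s) + of_nat j) (u - s - j))"
      proof -
        have a1: "of_nat (2 * s) + \<omega> + 1 = c + 1" unfolding c_def by simp
        have a2: "of_nat (u + (s + j)) + \<omega> = c + of_nat (u - s) + of_nat j" unfolding c_def using su by (simp add: of_nat_diff)
        have a3: "s + j - s = j" "u - (s + j) = u - s - j" by auto
        show ?thesis unfolding coef_def a1 a2 a3 e1 by (rule times_divide_eq_left)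
      qed
    qed
    also have "\<dots> = (if u - s = 0 then 1 else 0)"
    proof (rule G2core, intro allI impI)
      fix t assume t: "1 \<le> t \<and> t \<le> 2 * (u - s) - 1"
      have t1: "1 \<le> t" and t2: "t \<le> 2 * (u - s) - 1" using t by auto
      have t3: "t < 2 * (u - s)" using t1 t2 by simp
      have t4: "2 * s + t < 2 * u" using t3 su by simp
      have t5: "2 * s + t < 2 * ps l N" using t4 uL by simp
      have "1 \<le> 2 * s + t \<and> 2 * s + t \<le> 2 * ps l N - 1" using t1 t5 by simp
      then have "\<omega> + of_nat (2 * s + t) \<noteq> 0" using nz by blast
      then show "c + of_nat t \<noteq> 0" unfolding c_def by (simp add: algebra_simps)
    qed
    finally have S: "(\<Sum>k\<in>{0..ps l N}. if s \<le> k then coef k * of_nat ((u - s) choose (k - s)) else 0)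
        = (if u - s = 0 then 1 else 0)" .
    show ?thesis
    proof (cases "u - s = 0")
      case True2: True
      have "ps n N = ps m N" using True2 su unfolding s_def u_def by linarith
      then have nm: "n = m" by (rule eq_of_le_ps[OF n m True])
      have "(if u - s = 0 then 1 else (0::complex)) = 1" using True2 by simp
      then show ?thesis unfolding S nm by (simp add: EE_refl)
    next
      case False
      then have nm: "n \<noteq> m" unfolding s_def u_def by auto
      have "(if u - s = 0 then 1 else (0::complex)) = 0" using False by simp
      then show ?thesis unfolding S using nm by simp
    qed
  qed
  finally show ?thesis .
qed

lemma psum1: "psum u 1 q = of_nat (ps u q)"
  unfolding psum_def ps_def ..

lemma prod_sign: "(\<Prod>p\<in>{1..N}. (-1::complex)^(n p)) = (-1)^(ps n N)"
  unfolding ps_def by (simp add: power_sum)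

lemma poch_neg_nat: "pochhammer (- of_nat x) n = (-1)^n * of_nat (x choose n) * (fact n :: complex)"
proof -
  have "pochhammer (of_nat x - of_nat n + 1) n = (of_nat x gchoose n) * (fact n :: complex)"
    by (simp add: gbinomial_pochhammer')
  then show ?thesis unfolding pochhammer_minus by (simp add: binomial_gbinomial mult.assoc)
qed

lemma telescope:
  assumes "\<forall>p\<in>{1..N}. n p \<le> x p"
  shows "(\<Prod>p\<in>{1..N}. pochhammer (c + of_nat (ps x (p - 1)) - of_nat (ps n (p - 1))) (x p - n p))
    = pochhammer (c::complex) (ps x N - ps n N)"
  using assms
proof (induction N)
  case 0 then show ?case by simp
next
  case (Suc N)
  have le: "ps n N \<le> ps x N" using Suc.prems by (intro ps_mono) auto
  have le2: "n (Suc N) \<le> x (Suc N)" using Suc.prems by auto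
  have "(\<Prod>p\<in>{1..Suc N}. pochhammer (c + of_nat (ps x (p - 1)) - of_nat (ps n (p - 1))) (x p - n p))
     = (\<Prod>p\<in>{1..N}. pochhammer (c + of_nat (ps x (p - 1)) - of_nat (ps n (p - 1))) (x p - n p))
       * pochhammer (c + of_nat (ps x N) - of_nat (ps n N)) (x (Suc N) - n (Suc N))"
    by (simp add: atLeastAtMostSuc_conv mult.commute)
  also have "\<dots> = pochhammer c (ps x N - ps n N) * pochhammer (c + of_nat (ps x N - ps n N)) (x (Suc N) - n (Suc N))"
    using Suc le by (simp add: of_nat_diff algebra_simps)
  also have "\<dots> = pochhammer c (ps x N - ps n N + (x (Suc N) - n (Suc N)))"
    by (rule pochhammer_product'[symmetric])
  also have "ps x N - ps n N + (x (Suc N) - n (Suc N)) = ps x (Suc N) - ps n (Suc N)"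
    using le le2 by (simp add: ps_Suc)
  finally show ?case .
qed

definition alp :: "(nat \<Rightarrow> nat) \<Rightarrow> nat \<Rightarrow> (nat \<Rightarrow> complex) \<Rightarrow> complex \<Rightarrow> nat \<Rightarrow> complex" where
  "alp l N a \<omega> p = psum l p N + a p + \<omega> + 1"

definition gam :: "(nat \<Rightarrow> nat) \<Rightarrow> nat \<Rightarrow> (nat \<Rightarrow> complex) \<Rightarrow> complex \<Rightarrow> nat \<Rightarrow> complex" where
  "gam l N a \<omega>s p = psum l (p + 1) N - a p + \<omega>s"

definition K1 :: "nat \<Rightarrow> (nat \<Rightarrow> nat) \<Rightarrow> (nat \<Rightarrow> nat) \<Rightarrow> (nat \<Rightarrow> nat) \<Rightarrow> complex" where
  "K1 N l i n = (\<Prod>p\<in>{1..N}. fact (n p) * pochhammer (- of_nat (l p)) (i p) / (pochhammer (- of_nat (l p)) (n p) * fact (i p)))"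

lemma poch_negl_nz: "k \<le> L \<Longrightarrow> pochhammer (- of_nat L) k \<noteq> (0::complex)"
  by (simp add: pochhammer_eq_0_iff)

lemma rearr:
  fixes X Y fn Ln fi cx ci Li P1 P2 Q1 Q2 s :: complex
  assumes "Y = fn * Ln * fi" "X = (s * cx * fn) * (s * ci * fn) * Li" "fn \<noteq> 0" "Ln \<noteq> 0" "fi \<noteq> 0"
  shows "X / Y * P1 / Q1 * P2 / Q2 = (s * (cx * P1)) * (s * (ci * P2)) * (fn * Li / (Ln * fi)) / (Q1 * Q2)"
proof -
  have "X / Y = (s * cx) * (s * ci) * (fn * Li / (Ln * fi))"
    using assms by (simp add: field_simps)
  then show ?thesis by (simp add: divide_inverse inverse_mult_distrib mult_ac)
qed

lemma base_alp: "psum x 1 (p - 1) + psum n 1 p + psum l p N + a p + \<omega> + 1 = of_nat (ps x (p - 1) + ps n p) + alp l N a \<omega> p"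
  unfolding psum1 alp_def by (simp add: add.assoc)

lemma base_gam: "psum i 1 (p - 1) + psum n 1 p + psum l (p + 1) N - a p + \<omega>s = of_nat (ps i (p - 1) + ps n p) + gam l N a \<omega>s p"
  unfolding psum1 gam_def by (simp add: algebra_simps)

lemma base_Q: "psum x 1 N + psum n 1 N + psum x 1 (p - 1) - psum n 1 (p - 1) + \<omega>
   = (of_nat (ps x N + ps n N) + \<omega>) + of_nat (ps x (p - 1)) - of_nat (ps n (p - 1))"
  unfolding psum1 by (simp add: algebra_simps)

lemma rearr2:
  fixes s E1 E2 K P1 P2 :: complex
  shows "(s * E1) * (s * E2) * K / (P1 * P2) = (K * (s * E2 / P2)) * (s * E1 / P1)"
  by (simp add: divide_inverse inverse_mult_distrib mult_ac)

lemma not_in_tbox: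
  assumes "n \<in> tbox N a b" "n \<notin> tbox N a c"
  obtains p where "p \<in> {1..N}" "\<not> (a p \<le> n p \<and> n p \<le> c p)"
  using assms unfolding tbox_def PiE_iff by auto

lemma Tdecomp:
  assumes i: "i \<in> tbox N (\<lambda>_. 0) l" and x: "x \<in> tbox N (\<lambda>_. 0) l"
  shows "Tcoef N l \<omega> \<omega>s a i x = (\<Sum>n\<in>tbox N (\<lambda>_. 0) l. (K1 N l i n * Bm N (gam l N a \<omega>s) \<omega>s n i) * Bm N (alp l N a \<omega>) \<omega> n x)"
proof -
  let ?al = "alp l N a \<omega>" and ?ga = "gam l N a \<omega>s"
  have "Tcoef N l \<omega> \<omega>s a i x = (\<Sum>n\<in>tbox N (\<lambda>_. 0) (tmin i x). (K1 N l i n * Bm N ?ga \<omega>s n i) * Bm N ?al \<omega> n x)"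
    unfolding Tcoef_def
  proof (rule sum.cong[OF refl])
    fix n assume n: "n \<in> tbox N (\<lambda>_. 0) (tmin i x)"
    have nle: "n p \<le> i p" "n p \<le> x p" "i p \<le> l p" if "p \<in> {1..N}" for p
      using tbox_le[OF n that] tbox_le[OF i that] unfolding tmin_def by auto
    define F1 where "F1 p = (-1)^(n p) * ef ?al n x p" for p
    define F2 where "F2 p = (-1)^(n p) * ef ?ga n i p" for p
    define F3 where "F3 p = (fact (n p) * pochhammer (- of_nat (l p)) (i p) / (pochhammer (- of_nat (l p)) (n p) * fact (i p)) :: complex)" for p
    define Q1 where "Q1 p = pochhammer (psum x 1 N + psum n 1 N + psum x 1 (p - 1) - psum n 1 (p - 1) + \<omega>) (x p - n p)" for p
    define Q2 where "Q2 p = pochhammer (psum i 1 N + psum n 1 N + psum i 1 (p - 1) - psum n 1 (p - 1) + \<omega>s) (i p - n p)" for p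
    have per: "pochhammer (- of_nat (x p)) (n p) * pochhammer (- of_nat (i p)) (n p)
          * pochhammer (- of_nat (l p)) (i p)
        / (pochhammer 1 (n p) * pochhammer (- of_nat (l p)) (n p) * pochhammer 1 (i p))
        * pochhammer (psum x 1 (p - 1) + psum n 1 p + psum l p N + a p + \<omega> + 1) (x p - n p)
        / pochhammer (psum x 1 N + psum n 1 N + psum x 1 (p - 1) - psum n 1 (p - 1) + \<omega>) (x p - n p)
        * pochhammer (psum i 1 (p - 1) + psum n 1 p + psum l (p + 1) N - a p + \<omega>s) (i p - n p)
        / pochhammer (psum i 1 N + psum n 1 N + psum i 1 (p - 1) - psum n 1 (p - 1) + \<omega>s) (i p - n p)
      = F1 p * F2 p * F3 p / (Q1 p * Q2 p)" if p: "p \<in> {1..N}" for p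
    proof -
      have r: "pochhammer (- of_nat (x p)) (n p) * pochhammer (- of_nat (i p)) (n p)
          * pochhammer (- of_nat (l p)) (i p)
        / (pochhammer 1 (n p) * pochhammer (- of_nat (l p)) (n p) * pochhammer 1 (i p))
        * pochhammer (psum x 1 (p - 1) + psum n 1 p + psum l p N + a p + \<omega> + 1) (x p - n p)
        / Q1 p
        * pochhammer (psum i 1 (p - 1) + psum n 1 p + psum l (p + 1) N - a p + \<omega>s) (i p - n p)
        / Q2 p
        = ((-1)^(n p) * (of_nat (x p choose n p) * pochhammer (psum x 1 (p - 1) + psum n 1 p + psum l p N + a p + \<omega> + 1) (x p - n p)))
          * ((-1)^(n p) * (of_nat (i p choose n p) * pochhammer (psum i 1 (p - 1) + psum n 1 p + psum l (p + 1) N - a p + \<omega>s) (i p - n p)))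
          * (fact (n p) * pochhammer (- of_nat (l p)) (i p) / (pochhammer (- of_nat (l p)) (n p) * fact (i p))) / (Q1 p * Q2 p)"
      proof (rule rearr)
        show "pochhammer 1 (n p) * pochhammer (- of_nat (l p)) (n p) * pochhammer 1 (i p)
          = (fact (n p) * pochhammer (- of_nat (l p)) (n p) * fact (i p) :: complex)" by (simp add: pochhammer_fact)
        show "pochhammer (- of_nat (x p)) (n p) * pochhammer (- of_nat (i p)) (n p) * pochhammer (- of_nat (l p)) (i p)
          = ((-1)^(n p) * of_nat (x p choose n p) * fact (n p)) * ((-1)^(n p) * of_nat (i p choose n p) * fact (n p))
            * (pochhammer (- of_nat (l p)) (i p) :: complex)"
          by (simp add: poch_neg_nat)
        show "(fact (n p) :: complex) \<noteq> 0" by simp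
        show "pochhammer (- of_nat (l p)) (n p) \<noteq> (0::complex)" using nle[OF p] by (intro poch_negl_nz) auto
        show "(fact (i p) :: complex) \<noteq> 0" by simp
      qed
      have e1: "(-1)^(n p) * (of_nat (x p choose n p) * pochhammer (psum x 1 (p - 1) + psum n 1 p + psum l p N + a p + \<omega> + 1) (x p - n p)) = F1 p"
        unfolding F1_def ef_def base_alp using nle[OF p] by simp
      have e2: "(-1)^(n p) * (of_nat (i p choose n p) * pochhammer (psum i 1 (p - 1) + psum n 1 p + psum l (p + 1) N - a p + \<omega>s) (i p - n p)) = F2 p"
        unfolding F2_def ef_def base_gam using nle[OF p] by simp
      show ?thesis using r unfolding e1 e2 F3_def[symmetric] Q1_def Q2_def .
    qed
    have P1: "(\<Prod>p\<in>{1..N}. F1 p) = (-1)^(ps n N) * EE N ?al n x"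
      unfolding F1_def prod.distrib prod_sign EE_def ..
    have P2: "(\<Prod>p\<in>{1..N}. F2 p) = (-1)^(ps n N) * EE N ?ga n i"
      unfolding F2_def prod.distrib prod_sign EE_def ..
    have P3: "(\<Prod>p\<in>{1..N}. F3 p) = K1 N l i n" unfolding F3_def K1_def ..
    have PQ1: "(\<Prod>p\<in>{1..N}. Q1 p) = pochhammer (of_nat (ps x N + ps n N) + \<omega>) (ps x N - ps n N)"
      unfolding Q1_def base_Q using nle by (intro telescope) auto
    have PQ2: "(\<Prod>p\<in>{1..N}. Q2 p) = pochhammer (of_nat (ps i N + ps n N) + \<omega>s) (ps i N - ps n N)"
      unfolding Q2_def base_Q[where \<omega> = \<omega>s] using nle by (intro telescope) auto
    have "(\<Prod>p\<in>{1..N}. pochhammer (- of_nat (x p)) (n p) * pochhammer (- of_nat (i p)) (n p)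
          * pochhammer (- of_nat (l p)) (i p)
        / (pochhammer 1 (n p) * pochhammer (- of_nat (l p)) (n p) * pochhammer 1 (i p))
        * pochhammer (psum x 1 (p - 1) + psum n 1 p + psum l p N + a p + \<omega> + 1) (x p - n p)
        / pochhammer (psum x 1 N + psum n 1 N + psum x 1 (p - 1) - psum n 1 (p - 1) + \<omega>) (x p - n p)
        * pochhammer (psum i 1 (p - 1) + psum n 1 p + psum l (p + 1) N - a p + \<omega>s) (i p - n p)
        / pochhammer (psum i 1 N + psum n 1 N + psum i 1 (p - 1) - psum n 1 (p - 1) + \<omega>s) (i p - n p))
      = (\<Prod>p\<in>{1..N}. F1 p * F2 p * F3 p / (Q1 p * Q2 p))"
      by (rule prod.cong[OF refl per])
    also have "\<dots> = ((\<Prod>p\<in>{1..N}. F1 p) * (\<Prod>p\<in>{1..N}. F2 p) * (\<Prod>p\<in>{1..N}. F3 p)) / ((\<Prod>p\<in>{1..N}. Q1 p) * (\<Prod>p\<in>{1..N}. Q2 p))"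
      by (simp add: prod_dividef prod.distrib)
    also have "\<dots> = (K1 N l i n * Bm N ?ga \<omega>s n i) * Bm N ?al \<omega> n x"
      unfolding P1 P2 P3 PQ1 PQ2 Bm_def by (rule rearr2)
    finally show "(\<Prod>p\<in>{1..N}. pochhammer (- of_nat (x p)) (n p) * pochhammer (- of_nat (i p)) (n p)
          * pochhammer (- of_nat (l p)) (i p)
        / (pochhammer 1 (n p) * pochhammer (- of_nat (l p)) (n p) * pochhammer 1 (i p))
        * pochhammer (psum x 1 (p - 1) + psum n 1 p + psum l p N + a p + \<omega> + 1) (x p - n p)
        / pochhammer (psum x 1 N + psum n 1 N + psum x 1 (p - 1) - psum n 1 (p - 1) + \<omega>) (x p - n p)
        * pochhammer (psum i 1 (p - 1) + psum n 1 p + psum l (p + 1) N - a p + \<omega>s) (i p - n p)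
        / pochhammer (psum i 1 N + psum n 1 N + psum i 1 (p - 1) - psum n 1 (p - 1) + \<omega>s) (i p - n p))
      = (K1 N l i n * Bm N ?ga \<omega>s n i) * Bm N ?al \<omega> n x" .
  qed
  also have "\<dots> = (\<Sum>n\<in>tbox N (\<lambda>_. 0) l. (K1 N l i n * Bm N ?ga \<omega>s n i) * Bm N ?al \<omega> n x)"
  proof (rule sum.mono_neutral_left)
    show "finite (tbox N (\<lambda>_. 0) l)" by simp
    show "tbox N (\<lambda>_. 0) (tmin i x) \<subseteq> tbox N (\<lambda>_. 0) l"
    proof
      fix n assume n: "n \<in> tbox N (\<lambda>_. 0) (tmin i x)"
      have "n p \<le> l p" if "p \<in> {1..N}" for p
        using tbox_le[OF n that] tbox_le[OF i that] unfolding tmin_def by auto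
      then show "n \<in> tbox N (\<lambda>_. 0) l" using n unfolding tbox_def PiE_iff by auto
    qed
    show "\<forall>n\<in>tbox N (\<lambda>_. 0) l - tbox N (\<lambda>_. 0) (tmin i x). K1 N l i n * Bm N ?ga \<omega>s n i * Bm N ?al \<omega> n x = 0"
    proof
      fix n assume "n \<in> tbox N (\<lambda>_. 0) l - tbox N (\<lambda>_. 0) (tmin i x)"
      then obtain p where p: "p \<in> {1..N}" "\<not> n p \<le> tmin i x p" using not_in_tbox by blast
      then have "\<not> n p \<le> i p \<or> \<not> n p \<le> x p" unfolding tmin_def by auto
      then show "K1 N l i n * Bm N ?ga \<omega>s n i * Bm N ?al \<omega> n x = 0"
      proof
        assume "\<not> n p \<le> i p"
        then have "EE N ?ga n i = 0" using p by (intro EE_zero) auto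
        then show ?thesis by (simp add: Bm_def)
      next
        assume "\<not> n p \<le> x p"
        then have "EE N ?al n x = 0" using p by (intro EE_zero) auto
        then show ?thesis by (simp add: Bm_def)
      qed
    qed
  qed
  finally show ?thesis .
qed

definition K2 :: "nat \<Rightarrow> (nat \<Rightarrow> nat) \<Rightarrow> (nat \<Rightarrow> nat) \<Rightarrow> (nat \<Rightarrow> nat) \<Rightarrow> complex" where
  "K2 N l j n = (\<Prod>p\<in>{1..N}. fact (j p) * pochhammer (- of_nat (l p)) (n p) / (pochhammer (- of_nat (l p)) (j p) * fact (n p)))"

lemma rearr3:
  fixes X Y f1 Ln f2 g c1 c2 Li P1 P2 Q1 Q2 s1 s2 :: complex
  assumes "Y = f1 * Ln * f2" "X = (s1 * c1 * f1) * (s2 * c2 * g) * Li" "f1 \<noteq> 0" "Ln \<noteq> 0" "f2 \<noteq> 0"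
  shows "X / Y * P1 / Q1 * P2 / Q2 = (s1 * (c1 * P1)) * (s2 * (c2 * P2)) * (g * Li / (Ln * f2)) / (Q1 * Q2)"
proof -
  have "X / Y = (s1 * c1) * (s2 * c2) * (g * Li / (Ln * f2))"
    using assms by (simp add: field_simps)
  then show ?thesis by (simp add: divide_inverse inverse_mult_distrib mult_ac)
qed

lemma rearr4:
  fixes s1 s2 E1 E2 K P1 P2 :: complex
  shows "(s1 * E1) * (s2 * E2) * K / (P1 * P2) = (s1 * E1 / P1) * (K * (s2 * E2 / P2))"
  by (simp add: divide_inverse inverse_mult_distrib mult_ac)

lemma base_alpU: "psum x 1 p + psum n 1 (p - 1) + psum l p N + a p + \<omega> + 1 = of_nat (ps n (p - 1) + ps x p) + alp l N a \<omega> p"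
  unfolding psum1 alp_def by (simp add: algebra_simps)

lemma base_gamU: "psum j 1 p + psum n 1 (p - 1) + psum l (p + 1) N - a p + \<omega>s = of_nat (ps n (p - 1) + ps j p) + gam l N a \<omega>s p"
  unfolding psum1 gam_def by (simp add: algebra_simps)

lemma base_QU: "2 * psum x 1 N + psum n 1 (p - 1) - psum x 1 (p - 1) + \<omega> + 1
   = (of_nat (2 * ps x N) + \<omega> + 1) + of_nat (ps n (p - 1)) - of_nat (ps x (p - 1))"
  unfolding psum1 by (simp add: algebra_simps)

lemma Udecomp:
  assumes j: "j \<in> tbox N (\<lambda>_. 0) l" and x: "x \<in> tbox N (\<lambda>_. 0) l"
  shows "Ucoef N l \<omega> \<omega>s a j x = (\<Sum>n\<in>tbox N (\<lambda>_. 0) l. Cm N (alp l N a \<omega>) \<omega> x n * (K2 N l j n * Cm N (gam l N a \<omega>s) \<omega>s j n))"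
proof -
  let ?al = "alp l N a \<omega>" and ?ga = "gam l N a \<omega>s"
  have "Ucoef N l \<omega> \<omega>s a j x = (\<Sum>n\<in>tbox N (tmax x j) l. Cm N ?al \<omega> x n * (K2 N l j n * Cm N ?ga \<omega>s j n))"
    unfolding Ucoef_def
  proof (rule sum.cong[OF refl])
    fix n assume n: "n \<in> tbox N (tmax x j) l"
    have nle: "x p \<le> n p" "j p \<le> n p" "n p \<le> l p" if "p \<in> {1..N}" for p
      using tbox_le[OF n that] unfolding tmax_def by auto
    define F1 where "F1 p = (-1)^(x p) * ef ?al x n p" for p
    define F2 where "F2 p = (-1)^(j p) * ef ?ga j n p" for p
    define F3 where "F3 p = (fact (j p) * pochhammer (- of_nat (l p)) (n p) / (pochhammer (- of_nat (l p)) (j p) * fact (n p)) :: complex)" for p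
    define Q1 where "Q1 p = pochhammer (2 * psum x 1 N + psum n 1 (p - 1) - psum x 1 (p - 1) + \<omega> + 1) (n p - x p)" for p
    define Q2 where "Q2 p = pochhammer (2 * psum j 1 N + psum n 1 (p - 1) - psum j 1 (p - 1) + \<omega>s + 1) (n p - j p)" for p
    have per: "pochhammer (- of_nat (n p)) (x p) * pochhammer (- of_nat (n p)) (j p)
          * pochhammer (- of_nat (l p)) (n p)
        / (pochhammer 1 (x p) * pochhammer (- of_nat (l p)) (j p) * pochhammer 1 (n p))
        * pochhammer (psum x 1 p + psum n 1 (p - 1) + psum l p N + a p + \<omega> + 1) (n p - x p)
        / pochhammer (2 * psum x 1 N + psum n 1 (p - 1) - psum x 1 (p - 1) + \<omega> + 1) (n p - x p)
        * pochhammer (psum j 1 p + psum n 1 (p - 1) + psum l (p + 1) N - a p + \<omega>s) (n p - j p)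
        / pochhammer (2 * psum j 1 N + psum n 1 (p - 1) - psum j 1 (p - 1) + \<omega>s + 1) (n p - j p)
      = F1 p * F2 p * F3 p / (Q1 p * Q2 p)" if p: "p \<in> {1..N}" for p
    proof -
      have r: "pochhammer (- of_nat (n p)) (x p) * pochhammer (- of_nat (n p)) (j p)
          * pochhammer (- of_nat (l p)) (n p)
        / (pochhammer 1 (x p) * pochhammer (- of_nat (l p)) (j p) * pochhammer 1 (n p))
        * pochhammer (psum x 1 p + psum n 1 (p - 1) + psum l p N + a p + \<omega> + 1) (n p - x p)
        / Q1 p
        * pochhammer (psum j 1 p + psum n 1 (p - 1) + psum l (p + 1) N - a p + \<omega>s) (n p - j p)
        / Q2 p
        = ((-1)^(x p) * (of_nat (n p choose x p) * pochhammer (psum x 1 p + psum n 1 (p - 1) + psum l p N + a p + \<omega> + 1) (n p - x p)))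
          * ((-1)^(j p) * (of_nat (n p choose j p) * pochhammer (psum j 1 p + psum n 1 (p - 1) + psum l (p + 1) N - a p + \<omega>s) (n p - j p)))
          * (fact (j p) * pochhammer (- of_nat (l p)) (n p) / (pochhammer (- of_nat (l p)) (j p) * fact (n p))) / (Q1 p * Q2 p)"
      proof (rule rearr3)
        show "pochhammer 1 (x p) * pochhammer (- of_nat (l p)) (j p) * pochhammer 1 (n p)
          = (fact (x p) * pochhammer (- of_nat (l p)) (j p) * fact (n p) :: complex)" by (simp add: pochhammer_fact)
        show "pochhammer (- of_nat (n p)) (x p) * pochhammer (- of_nat (n p)) (j p) * pochhammer (- of_nat (l p)) (n p)
          = ((-1)^(x p) * of_nat (n p choose x p) * fact (x p)) * ((-1)^(j p) * of_nat (n p choose j p) * fact (j p))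
            * (pochhammer (- of_nat (l p)) (n p) :: complex)"
          by (simp add: poch_neg_nat)
        show "(fact (x p) :: complex) \<noteq> 0" by simp
        show "pochhammer (- of_nat (l p)) (j p) \<noteq> (0::complex)" using nle[OF p] by (intro poch_negl_nz) auto
        show "(fact (n p) :: complex) \<noteq> 0" by simp
      qed
      have e1: "(-1)^(x p) * (of_nat (n p choose x p) * pochhammer (psum x 1 p + psum n 1 (p - 1) + psum l p N + a p + \<omega> + 1) (n p - x p)) = F1 p"
        unfolding F1_def ef_def base_alpU using nle[OF p] by simp
      have e2: "(-1)^(j p) * (of_nat (n p choose j p) * pochhammer (psum j 1 p + psum n 1 (p - 1) + psum l (p + 1) N - a p + \<omega>s) (n p - j p)) = F2 p"
        unfolding F2_def ef_def base_gamU using nle[OF p] by simp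
      show ?thesis using r unfolding e1 e2 F3_def[symmetric] Q1_def Q2_def .
    qed
    have P1: "(\<Prod>p\<in>{1..N}. F1 p) = (-1)^(ps x N) * EE N ?al x n"
      unfolding F1_def prod.distrib prod_sign EE_def ..
    have P2: "(\<Prod>p\<in>{1..N}. F2 p) = (-1)^(ps j N) * EE N ?ga j n"
      unfolding F2_def prod.distrib prod_sign EE_def ..
    have P3: "(\<Prod>p\<in>{1..N}. F3 p) = K2 N l j n" unfolding F3_def K2_def ..
    have PQ1: "(\<Prod>p\<in>{1..N}. Q1 p) = pochhammer (of_nat (2 * ps x N) + \<omega> + 1) (ps n N - ps x N)"
      unfolding Q1_def base_QU using nle by (intro telescope) auto
    have PQ2: "(\<Prod>p\<in>{1..N}. Q2 p) = pochhammer (of_nat (2 * ps j N) + \<omega>s + 1) (ps n N - ps j N)"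
      unfolding Q2_def base_QU[where \<omega> = \<omega>s] using nle by (intro telescope) auto
    have "(\<Prod>p\<in>{1..N}. pochhammer (- of_nat (n p)) (x p) * pochhammer (- of_nat (n p)) (j p)
          * pochhammer (- of_nat (l p)) (n p)
        / (pochhammer 1 (x p) * pochhammer (- of_nat (l p)) (j p) * pochhammer 1 (n p))
        * pochhammer (psum x 1 p + psum n 1 (p - 1) + psum l p N + a p + \<omega> + 1) (n p - x p)
        / pochhammer (2 * psum x 1 N + psum n 1 (p - 1) - psum x 1 (p - 1) + \<omega> + 1) (n p - x p)
        * pochhammer (psum j 1 p + psum n 1 (p - 1) + psum l (p + 1) N - a p + \<omega>s) (n p - j p)
        / pochhammer (2 * psum j 1 N + psum n 1 (p - 1) - psum j 1 (p - 1) + \<omega>s + 1) (n p - j p))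
      = (\<Prod>p\<in>{1..N}. F1 p * F2 p * F3 p / (Q1 p * Q2 p))"
      by (rule prod.cong[OF refl per])
    also have "\<dots> = ((\<Prod>p\<in>{1..N}. F1 p) * (\<Prod>p\<in>{1..N}. F2 p) * (\<Prod>p\<in>{1..N}. F3 p)) / ((\<Prod>p\<in>{1..N}. Q1 p) * (\<Prod>p\<in>{1..N}. Q2 p))"
      by (simp add: prod_dividef prod.distrib)
    also have "\<dots> = Cm N ?al \<omega> x n * (K2 N l j n * Cm N ?ga \<omega>s j n)"
      unfolding P1 P2 P3 PQ1 PQ2 Cm_def by (rule rearr4)
    finally show "(\<Prod>p\<in>{1..N}. pochhammer (- of_nat (n p)) (x p) * pochhammer (- of_nat (n p)) (j p)
          * pochhammer (- of_nat (l p)) (n p)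
        / (pochhammer 1 (x p) * pochhammer (- of_nat (l p)) (j p) * pochhammer 1 (n p))
        * pochhammer (psum x 1 p + psum n 1 (p - 1) + psum l p N + a p + \<omega> + 1) (n p - x p)
        / pochhammer (2 * psum x 1 N + psum n 1 (p - 1) - psum x 1 (p - 1) + \<omega> + 1) (n p - x p)
        * pochhammer (psum j 1 p + psum n 1 (p - 1) + psum l (p + 1) N - a p + \<omega>s) (n p - j p)
        / pochhammer (2 * psum j 1 N + psum n 1 (p - 1) - psum j 1 (p - 1) + \<omega>s + 1) (n p - j p))
      = Cm N ?al \<omega> x n * (K2 N l j n * Cm N ?ga \<omega>s j n)" .
  qed
  also have "\<dots> = (\<Sum>n\<in>tbox N (\<lambda>_. 0) l. Cm N ?al \<omega> x n * (K2 N l j n * Cm N ?ga \<omega>s j n))"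
  proof (rule sum.mono_neutral_left)
    show "finite (tbox N (\<lambda>_. 0) l)" by simp
    show "tbox N (tmax x j) l \<subseteq> tbox N (\<lambda>_. 0) l"
      unfolding tbox_def by (auto simp: PiE_iff)
    show "\<forall>n\<in>tbox N (\<lambda>_. 0) l - tbox N (tmax x j) l. Cm N ?al \<omega> x n * (K2 N l j n * Cm N ?ga \<omega>s j n) = 0"
    proof
      fix n assume "n \<in> tbox N (\<lambda>_. 0) l - tbox N (tmax x j) l"
      then have n1: "n \<in> tbox N (\<lambda>_. 0) l" "n \<notin> tbox N (tmax x j) l" by auto
      obtain p where p: "p \<in> {1..N}" "\<not> (tmax x j p \<le> n p \<and> n p \<le> l p)"
        using n1 unfolding tbox_def PiE_iff by auto
      have "n p \<le> l p" using tbox_le[OF n1(1) p(1)] by simp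
      then have "\<not> x p \<le> n p \<or> \<not> j p \<le> n p" using p unfolding tmax_def by auto
      then show "Cm N ?al \<omega> x n * (K2 N l j n * Cm N ?ga \<omega>s j n) = 0"
      proof
        assume "\<not> x p \<le> n p"
        then have "EE N ?al x n = 0" using p by (intro EE_zero) auto
        then show ?thesis by (simp add: Cm_def)
      next
        assume "\<not> j p \<le> n p"
        then have "EE N ?ga j n = 0" using p by (intro EE_zero) auto
        then show ?thesis by (simp add: Cm_def)
      qed
    qed
  qed
  finally show ?thesis .
qed

lemma nz_conv:
  assumes "\<forall>k::int. - 2 * int (\<Sum>p\<in>{1..N}. l p) + 1 \<le> k \<and> k \<le> -1 \<longrightarrow> \<omega> \<noteq> of_int k"
  shows "\<forall>t. 1 \<le> t \<and> t \<le> 2 * ps l N - 1 \<longrightarrow> \<omega> + of_nat t \<noteq> (0::complex)"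
proof (intro allI impI)
  fix t assume t: "1 \<le> t \<and> t \<le> 2 * ps l N - 1"
  have "- 2 * int (\<Sum>p\<in>{1..N}. l p) + 1 \<le> - int t \<and> - int t \<le> -1"
    using t unfolding ps_def by linarith
  then have "\<omega> \<noteq> of_int (- int t)" using assms by blast
  then have "\<omega> \<noteq> - of_nat t" by simp
  then show "\<omega> + of_nat t \<noteq> 0" by (simp only: eq_neg_iff_add_eq_0 not_False_eq_True)
qed

lemma K12:
  assumes n: "n \<in> tbox N (\<lambda>_. 0) l"
  shows "K1 N l i n * K2 N l j n = (\<Prod>p\<in>{1..N}. fact (j p) * pochhammer (- of_nat (l p)) (i p) / (pochhammer (- of_nat (l p)) (j p) * fact (i p)))"
  unfolding K1_def K2_def prod.distrib[symmetric]
proof (rule prod.cong[OF refl])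
  fix p assume p: "p \<in> {1..N}"
  have "pochhammer (- of_nat (l p)) (n p) \<noteq> (0::complex)" using tbox_le[OF n p] by (intro poch_negl_nz) auto
  then show "fact (n p) * pochhammer (- of_nat (l p)) (i p) / (pochhammer (- of_nat (l p)) (n p) * fact (i p)) *
         (fact (j p) * pochhammer (- of_nat (l p)) (n p) / (pochhammer (- of_nat (l p)) (j p) * fact (n p))) =
         (fact (j p) * pochhammer (- of_nat (l p)) (i p) / (pochhammer (- of_nat (l p)) (j p) * fact (i p)) :: complex)"
    by (simp add: field_simps)
qed

lemma Kdiag:
  assumes i: "i \<in> tbox N (\<lambda>_. 0) l"
  shows "(\<Prod>p\<in>{1..N}. fact (i p) * pochhammer (- of_nat (l p)) (i p) / (pochhammer (- of_nat (l p)) (i p) * fact (i p))) = (1::complex)"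
proof (rule prod.neutral, intro ballI)
  fix p assume p: "p \<in> {1..N}"
  have "pochhammer (- of_nat (l p)) (i p) \<noteq> (0::complex)" using tbox_le[OF i p] by (intro poch_negl_nz) auto
  then show "fact (i p) * pochhammer (- of_nat (l p)) (i p) / (pochhammer (- of_nat (l p)) (i p) * fact (i p)) = (1::complex)"
    by simp
qed

theorem mainTheorem1:
  fixes N :: nat and l :: "nat \<Rightarrow> nat" and \<omega> \<omega>s :: complex and a :: "nat \<Rightarrow> complex"
    and i j :: "nat \<Rightarrow> nat"
  assumes "\<forall>k::int. - 2 * int (\<Sum>p\<in>{1..N}. l p) + 1 \<le> k \<and> k \<le> -1 \<longrightarrow> \<omega> \<noteq> of_int k"
    and "\<forall>k::int. - 2 * int (\<Sum>p\<in>{1..N}. l p) + 1 \<le> k \<and> k \<le> -1 \<longrightarrow> \<omega>s \<noteq> of_int k"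
    and "i \<in> tbox N (\<lambda>_. 0) l" and "j \<in> tbox N (\<lambda>_. 0) l"
  shows "(\<Sum>x\<in>tbox N (\<lambda>_. 0) l. Tcoef N l \<omega> \<omega>s a i x * Ucoef N l \<omega> \<omega>s a j x)
         = (if i = j then 1 else 0)"
proof -
  let ?X = "tbox N (\<lambda>_. 0) l"
  let ?al = "alp l N a \<omega>" and ?ga = "gam l N a \<omega>s"
  have nz1: "\<forall>t. 1 \<le> t \<and> t \<le> 2 * ps l N - 1 \<longrightarrow> \<omega> + of_nat t \<noteq> (0::complex)" by (rule nz_conv[OF assms(1)])
  have nz2: "\<forall>t. 1 \<le> t \<and> t \<le> 2 * ps l N - 1 \<longrightarrow> \<omega>s + of_nat t \<noteq> (0::complex)" by (rule nz_conv[OF assms(2)])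
  define A where "A n = K1 N l i n * Bm N ?ga \<omega>s n i" for n
  define D where "D m = K2 N l j m * Cm N ?ga \<omega>s j m" for m
  define B where "B n x = Bm N ?al \<omega> n x" for n x
  define C where "C x m = Cm N ?al \<omega> x m" for x m
  have "(\<Sum>x\<in>?X. Tcoef N l \<omega> \<omega>s a i x * Ucoef N l \<omega> \<omega>s a j x)
      = (\<Sum>x\<in>?X. (\<Sum>n\<in>?X. A n * B n x) * (\<Sum>m\<in>?X. C x m * D m))"
    unfolding A_def B_def C_def D_def
    by (rule sum.cong[OF refl]) (simp add: Tdecomp[OF assms(3)] Udecomp[OF assms(4)])
  also have "\<dots> = (\<Sum>x\<in>?X. \<Sum>n\<in>?X. \<Sum>m\<in>?X. A n * B n x * (C x m * D m))"
    by (simp add: sum_product)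
  also have "\<dots> = (\<Sum>n\<in>?X. \<Sum>x\<in>?X. \<Sum>m\<in>?X. A n * B n x * (C x m * D m))"
    by (rule sum.swap)
  also have "\<dots> = (\<Sum>n\<in>?X. \<Sum>m\<in>?X. \<Sum>x\<in>?X. A n * B n x * (C x m * D m))"
    by (rule sum.cong[OF refl], rule sum.swap)
  also have "\<dots> = (\<Sum>n\<in>?X. \<Sum>m\<in>?X. A n * D m * (\<Sum>x\<in>?X. B n x * C x m))"
    by (simp add: sum_distrib_left mult_ac)
  also have "\<dots> = (\<Sum>n\<in>?X. \<Sum>m\<in>?X. A n * D m * (if n = m then 1 else 0))"
    unfolding B_def C_def by (intro sum.cong refl) (simp add: BC[OF nz1])
  also have "\<dots> = (\<Sum>n\<in>?X. A n * D n)"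
    by (intro sum.cong refl) (simp add: if_distrib cong: if_cong)
  also have "\<dots> = (\<Sum>n\<in>?X. (\<Prod>p\<in>{1..N}. fact (j p) * pochhammer (- of_nat (l p)) (i p) / (pochhammer (- of_nat (l p)) (j p) * fact (i p)))
       * (Cm N ?ga \<omega>s j n * Bm N ?ga \<omega>s n i))"
  proof (rule sum.cong[OF refl])
    fix n assume n: "n \<in> ?X"
    show "A n * D n = (\<Prod>p\<in>{1..N}. fact (j p) * pochhammer (- of_nat (l p)) (i p) / (pochhammer (- of_nat (l p)) (j p) * fact (i p)))
       * (Cm N ?ga \<omega>s j n * Bm N ?ga \<omega>s n i)"
      unfolding A_def D_def K12[OF n, symmetric] by (simp add: mult_ac)
  qed
  also have "\<dots> = (\<Prod>p\<in>{1..N}. fact (j p) * pochhammer (- of_nat (l p)) (i p) / (pochhammer (- of_nat (l p)) (j p) * fact (i p)))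
       * (if j = i then 1 else 0)"
    unfolding sum_distrib_left[symmetric] CB[OF nz2 assms(4) assms(3)] ..
  also have "\<dots> = (if i = j then 1 else 0)"
    using Kdiag[OF assms(3)] by auto
  finally show ?thesis .
qed

end
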